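(* Let $p$ be a prime number and $d$ a positive integer, and let $i\ge1$ be such that $P_0^{i-1}\le d\le P_0^i$. Then $\tau_p(d)=i+1$ if $d=P_j^i$ for some $j\le i$, and $\tau_p(d)=i$ otherwise. Equivalently, $\tau_p(d)=\lceil\log_p((p-1)d+1)\rceil$ if $d$ is a sum of consecutive powers of $p$, and $\tau_p(d)=\lceil\log_p((p-1)d+1)\rceil-1$ otherwise.
   Context: For non-negative integers $j\le i$, $P_j^i=p^j+p^{j+1}+\dots+p^i=\frac{p^{i+1}-p^j}{p-1}$. A sum of consecutive powers of $p$ means an integer of the form $P_j^i$. For a positive integer $d$, $\tau_p(d)$ is the maximum of $s+\min\{v_p(d_1),\dots,v_p(d_s)\}$ over all partitions $d=d_1+\dots+d_s$ into positive integers with $d_{i+1}\le p^{-1}d_i$ for $i=1,\dots,s-1$, where $v_p$ is the $p$-adic valuation. *)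

theory Defs
  imports Complex_Main "HOL-Computational_Algebra.Primes"
begin

text \<open>P_j^i = p^j + ... + p^i (the sum of consecutive powers of p from j to i).\<close>
definition cpow_sum :: "nat \<Rightarrow> nat \<Rightarrow> nat \<Rightarrow> nat" where
  "cpow_sum p j i = (\<Sum>k=j..i. p ^ k)"

text \<open>Admissible partitions d = d_1 + ... + d_s into positive parts with
  d_(k+1) <= d_k / p, i.e. p * d_(k+1) <= d_k.\<close>
definition adm_partition :: "nat \<Rightarrow> nat \<Rightarrow> nat list \<Rightarrow> bool" where
  "adm_partition p d ds \<longleftrightarrow> ds \<noteq> [] \<and> sum_list ds = d \<and> (\<forall>x\<in>set ds. 0 < x) \<and>
     (\<forall>k. Suc k < length ds \<longrightarrow> p * ds ! Suc k \<le> ds ! k)"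

definition tau :: "nat \<Rightarrow> nat \<Rightarrow> nat" where
  "tau p d = Max {length ds + Min (multiplicity p ` set ds) | ds. adm_partition p d ds}"

end

theory Submission
  imports Defs
begin

definition chn :: "nat \<Rightarrow> nat list \<Rightarrow> bool" where
  "chn p ds \<longleftrightarrow> (\<forall>k. Suc k < length ds \<longrightarrow> p * ds ! Suc k \<le> ds ! k)"

lemma chn_Nil[simp]: "chn p []" by (simp add: chn_def)

lemma chn_Cons: "chn p (x # xs) \<longleftrightarrow> (xs \<noteq> [] \<longrightarrow> p * hd xs \<le> x) \<and> chn p xs"
proof
  assume h: "chn p (x # xs)"
  show "(xs \<noteq> [] \<longrightarrow> p * hd xs \<le> x) \<and> chn p xs"
  proof
    show "xs \<noteq> [] \<longrightarrow> p * hd xs \<le> x"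
      using h[unfolded chn_def, rule_format, of 0] by (cases xs) auto
    show "chn p xs" unfolding chn_def
      using h[unfolded chn_def] by (metis Suc_less_eq length_Cons nth_Cons_Suc)
  qed
next
  assume h: "(xs \<noteq> [] \<longrightarrow> p * hd xs \<le> x) \<and> chn p xs"
  show "chn p (x # xs)" unfolding chn_def
  proof (intro allI impI)
    fix k assume k: "Suc k < length (x # xs)"
    show "p * (x # xs) ! Suc k \<le> (x # xs) ! k"
    proof (cases k)
      case 0 then show ?thesis using h k by (cases xs) auto
    next
      case (Suc k') then show ?thesis using h k unfolding chn_def by auto
    qed
  qed
qed

lemma geo: assumes "1 \<le> p" "j \<le> i" shows "(p - 1) * cpow_sum p j i + p ^ j = p ^ Suc i"
  using assms(2)
proof (induction i)
  case 0 then show ?case using assms(1) by (simp add: cpow_sum_def)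
next
  case (Suc i)
  obtain q where q: "p = Suc q" using assms(1) by (cases p) auto
  show ?case
  proof (cases "j = Suc i")
    case True then show ?thesis by (simp add: cpow_sum_def q)
  next
    case False
    then have ji: "j \<le> i" using Suc.prems by simp
    have "cpow_sum p j (Suc i) = cpow_sum p j i + p ^ Suc i"
      using ji by (simp add: cpow_sum_def)
    then show ?thesis using Suc.IH[OF ji] by (simp add: q algebra_simps)
  qed
qed

lemma shift: "p ^ m * cpow_sum p 0 n = cpow_sum p m (m + n)"
proof -
  have "cpow_sum p m (m + n) = (\<Sum>k=0..n. p ^ (k + m))"
    unfolding cpow_sum_def using sum.shift_bounds_cl_nat_ivl[of "\<lambda>k. p ^ k" 0 m n]
    by (simp add: add.commute)
  then show ?thesis by (simp add: cpow_sum_def sum_distrib_left power_add mult.commute)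
qed

lemma chain_bound:
  assumes "1 \<le> p" "chn p ds" "ds \<noteq> []" "\<forall>x\<in>set ds. 0 < x \<and> p ^ m dvd x"
  shows "p ^ (m + length ds - 1) \<le> hd ds \<and> p ^ (m + length ds) \<le> (p - 1) * sum_list ds + p ^ m"
  using assms(2-4)
proof (induction ds)
  case Nil then show ?case by simp
next
  case (Cons x xs)
  obtain q where q: "p = Suc q" using assms(1) by (cases p) auto
  have x: "0 < x" "p ^ m dvd x" using Cons.prems by auto
  have xm: "p ^ m \<le> x" using x by (simp add: dvd_imp_le)
  show ?case
  proof (cases "xs = []")
    case True
    have "(p - 1) * p ^ m \<le> (p - 1) * x" using xm by simp
    then show ?thesis using True xm by (simp add: q)
  next
    case False
    have c: "p * hd xs \<le> x" "chn p xs" using Cons.prems(1) False by (auto simp: chn_Cons)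
    have IH: "p ^ (m + length xs - 1) \<le> hd xs" "p ^ (m + length xs) \<le> (p - 1) * sum_list xs + p ^ m"
      using Cons.IH[OF c(2) False] Cons.prems(3) by auto
    have L: "length xs \<ge> 1" using False by (cases xs) auto
    have "p * p ^ (m + length xs - 1) \<le> p * hd xs" using IH(1) by simp
    moreover have "p * p ^ (m + length xs - 1) = p ^ (m + length xs)"
      using L by (cases "m + length xs") auto
    ultimately have x2: "p ^ (m + length xs) \<le> x" using c(1) by linarith
    have A: "(p - 1) * p ^ (m + length xs) \<le> (p - 1) * x" using x2 by simp
    have B: "p ^ (m + length xs) * p = (p - 1) * p ^ (m + length xs) + p ^ (m + length xs)"
      by (simp add: q)
    have "p ^ (m + length xs) * p \<le> (p - 1) * x + (p - 1) * sum_list xs + p ^ m"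
      using IH(2) A B by linarith
    then show ?thesis using x2 by (simp add: algebra_simps)
  qed
qed


lemma upper_arith:
  assumes p: "2 \<le> p" and s: "1 \<le> s" and h1: "p ^ (m + s) \<le> (p - 1) * d + p ^ m"
    and dv: "p ^ m dvd d" and h2: "(p - 1) * d + 1 \<le> p ^ Suc i"
  shows "m + s \<le> Suc i \<and> (m + s = Suc i \<longrightarrow> d = cpow_sum p m i)"
proof (cases "m + s \<le> i")
  case True then show ?thesis by simp
next
  case False
  obtain E where E: "d = p ^ m * E" using dv by blast
  have pm: "0 < p ^ m" using p by simp
  have "p ^ m * p ^ s \<le> p ^ m * ((p - 1) * E + 1)"
    using h1 by (simp add: E power_add algebra_simps)
  then have a: "p ^ s \<le> (p - 1) * E + 1" using pm by (metis mult_le_cancel1)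
  have "p ^ Suc i \<le> p ^ (m + s)" using False p by (intro power_increasing) auto
  then have "p ^ m * ((p - 1) * E) < p ^ m * p ^ s"
    using h2 by (simp add: E power_add algebra_simps)
  then have b: "(p - 1) * E < p ^ s" using pm by (metis mult_less_cancel1)
  have c: "(p - 1) * E + 1 = p ^ s" using a b by simp
  have ms: "m + s = Suc i"
  proof (rule ccontr)
    assume "m + s \<noteq> Suc i"
    then have ge: "Suc (Suc i) \<le> m + s" using False by simp
    define t where "t = m + s - 1"
    have t: "m + s = Suc t" using s unfolding t_def by simp
    have "p ^ Suc i \<le> p ^ t" using ge p t by (intro power_increasing) auto
    moreover have "p ^ m \<le> p ^ t" using s p t by (intro power_increasing) auto
    moreover have "2 * p ^ t \<le> p ^ Suc t" using p by simp
    ultimately have X: "p ^ Suc i + p ^ m \<le> p ^ (m + s)" unfolding t by linarith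
    have "(p - 1) * d + p ^ m = p ^ m * ((p - 1) * E + 1)" by (simp add: E algebra_simps)
    also have "\<dots> = p ^ (m + s)" using c by (simp add: power_add)
    finally show False using X h2 pm by linarith
  qed
  have g: "(p - 1) * cpow_sum p 0 (s - 1) + 1 = p ^ s"
    using geo[of p 0 "s - 1"] p s by simp
  have "(p - 1) * E = (p - 1) * cpow_sum p 0 (s - 1)" using c g by linarith
  then have "E = cpow_sum p 0 (s - 1)" using p by simp
  then have "d = cpow_sum p m (m + (s - 1))" using E shift by simp
  then show ?thesis using ms s by simp
qed

fun desc :: "nat \<Rightarrow> nat \<Rightarrow> nat \<Rightarrow> nat list" where
  "desc p j 0 = [p ^ j]"
| "desc p j (Suc n) = p ^ (j + Suc n) # desc p j n"

lemma desc_props: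
  "desc p j n \<noteq> [] \<and> hd (desc p j n) = p ^ (j + n) \<and> length (desc p j n) = Suc n \<and>
   sum_list (desc p j n) = cpow_sum p j (j + n) \<and> chn p (desc p j n) \<and>
   set (desc p j n) = (\<lambda>k. p ^ k) ` {j..j+n}"
proof (induction n)
  case 0 then show ?case by (simp add: cpow_sum_def chn_def)
next
  case (Suc n)
  have "cpow_sum p j (j + Suc n) = cpow_sum p j (j + n) + p ^ (j + Suc n)"
    by (simp add: cpow_sum_def)
  moreover have "{j..j + Suc n} = insert (j + Suc n) {j..j+n}" by auto
  ultimately show ?case using Suc by (auto simp: chn_Cons)
qed


lemma dvd_sum_list_all: "\<forall>x\<in>set xs. (a::nat) dvd x \<Longrightarrow> a dvd sum_list xs"
  by (induction xs) auto

lemma ceil_log: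
  fixes p k N :: nat
  assumes "2 \<le> p" "p ^ k \<le> N" "N \<le> p ^ Suc k"
  shows "\<lceil>log (real p) (real N)\<rceil> = (if N = p ^ k then int k else int k + 1)"
proof -
  have p1: "1 < real p" using assms by simp
  have N0: "0 < real N" using assms(1,2) by (metis less_le_trans of_nat_0_less_iff pos2 power_eq_0_iff zero_less_power le_less_trans le_numeral_extra(4) not_less_zero) 
  have L: "log (real p) (real p ^ j) = real j" for j using p1 by simp
  show ?thesis
  proof (cases "N = p ^ k")
    case True
    then have "log (real p) (real N) = real k" using L by simp
    then show ?thesis using True by simp
  next
    case False
    then have lt: "p ^ k < N" using assms by simp
    have lt': "real p ^ k < real N" using lt by (metis of_nat_less_iff of_nat_power)
    have le': "real N \<le> real p ^ Suc k" using assms(3) by (metis of_nat_le_iff of_nat_power)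
    have a: "log (real p) (real p ^ k) < log (real p) (real N)"
      using lt' p1 N0 by (subst log_less_cancel_iff) auto
    have b: "log (real p) (real N) \<le> log (real p) (real p ^ Suc k)"
      using le' p1 N0 by (subst log_le_cancel_iff) auto
    show ?thesis using a b False unfolding L by (simp add: ceiling_eq_iff)
  qed
qed

lemma upper_part:
  assumes p: "prime p" and ad: "adm_partition p d ds" and hi: "(p - 1) * d + 1 \<le> p ^ Suc i"
  shows "length ds + Min (multiplicity p ` set ds) \<le> Suc i \<and>
    (length ds + Min (multiplicity p ` set ds) = Suc i \<longrightarrow> (\<exists>j\<le>i. d = cpow_sum p j i))"
proof -
  have p2: "2 \<le> p" using p by (simp add: prime_ge_2_nat)
  define m where "m = Min (multiplicity p ` set ds)"
  have ne: "ds \<noteq> []" and sd: "sum_list ds = d" and pos: "\<forall>x\<in>set ds. 0 < x"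
    and ch: "chn p ds" using ad unfolding adm_partition_def chn_def by auto
  have dvx: "\<forall>x\<in>set ds. 0 < x \<and> p ^ m dvd x"
  proof
    fix x assume x: "x \<in> set ds"
    have "m \<le> multiplicity p x" unfolding m_def using x by (intro Min_le) auto
    then show "0 < x \<and> p ^ m dvd x" using x pos by (simp add: multiplicity_dvd')
  qed
  have cb: "p ^ (m + length ds) \<le> (p - 1) * d + p ^ m"
    using chain_bound[of p ds m] p2 ch ne dvx sd by auto
  have dvd: "p ^ m dvd d" using dvd_sum_list_all[of ds "p ^ m"] dvx sd by auto
  have s1: "1 \<le> length ds" using ne by (cases ds) auto
  have "m + length ds \<le> Suc i \<and> (m + length ds = Suc i \<longrightarrow> d = cpow_sum p m i)"
    using upper_arith[OF p2 s1 _ dvd hi] cb by simp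
  then show ?thesis unfolding m_def[symmetric] using s1
    by (metis add.commute add_le_cancel_left le_add1 le_trans plus_1_eq_Suc)
qed

lemma desc_value:
  assumes p: "prime p" and ji: "j \<le> i"
  shows "adm_partition p (cpow_sum p j i) (desc p j (i - j)) \<and>
    length (desc p j (i - j)) + Min (multiplicity p ` set (desc p j (i - j))) = Suc i"
proof -
  have pe: "prime_elem p" using p by auto
  have p0: "0 < p" using p prime_gt_0_nat by blast
  note D = desc_props[of p j "i - j"]
  have ji': "j + (i - j) = i" using ji by simp
  have "multiplicity p ` set (desc p j (i - j)) = {j..i}"
    using D ji' pe by (simp add: image_image)
  then have "Min (multiplicity p ` set (desc p j (i - j))) = j" using ji
    by (metis Min_eqI atLeastAtMost_iff finite_atLeastAtMost order_refl)
  moreover have "adm_partition p (cpow_sum p j i) (desc p j (i - j))"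
    unfolding adm_partition_def using D ji' p0 by (auto simp: chn_def)
  ultimately show ?thesis using D ji by simp
qed


lemma lower_part:
  assumes p: "prime p" and i: "1 \<le> i" and lo: "cpow_sum p 0 (i - 1) \<le> d" and d0: "0 < d"
  shows "\<exists>ds. adm_partition p d ds \<and> length ds = i"
proof (cases "i = 1")
  case True
  then show ?thesis using d0 by (intro exI[of _ "[d]"]) (simp add: adm_partition_def)
next
  case False
  then obtain n where n: "i = Suc (Suc n)" using i by (metis One_nat_def Suc_le_D le_SucE not0_implies_Suc le_zero_eq)
  have p0: "0 < p" using p prime_gt_0_nat by blast
  have cs: "cpow_sum p 0 (Suc n) = cpow_sum p 0 n + p ^ Suc n" by (simp add: cpow_sum_def)
  define x where "x = d - cpow_sum p 0 n"
  have x: "p ^ Suc n \<le> x" "x + cpow_sum p 0 n = d" using lo cs n unfolding x_def by auto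
  have xp: "0 < x" using x(1) p0 by (metis le_less_trans pos2 power_eq_0_iff gr0I not_less_zero less_le_trans zero_less_power)
  note D = desc_props[of p 0 n]
  have "adm_partition p d (x # desc p 0 n)"
    unfolding adm_partition_def
  proof (intro conjI)
    show "sum_list (x # desc p 0 n) = d" using D x by simp
    show "\<forall>y\<in>set (x # desc p 0 n). 0 < y" using D xp p0 by auto
    have "chn p (x # desc p 0 n)" using D x(1) by (simp add: chn_Cons)
    then show "\<forall>k. Suc k < length (x # desc p 0 n) \<longrightarrow>
      p * (x # desc p 0 n) ! Suc k \<le> (x # desc p 0 n) ! k" unfolding chn_def by blast
  qed simp
  then show ?thesis using D n by (intro exI[of _ "x # desc p 0 n"]) simp
qed

theorem proposition2p20:
  fixes p d i :: nat
  assumes "prime p" and "0 < d" and "1 \<le> i"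
    and "cpow_sum p 0 (i - 1) \<le> d" and "d \<le> cpow_sum p 0 i"
  shows "tau p d = (if \<exists>j\<le>i. d = cpow_sum p j i then i + 1 else i)
    \<and> int (tau p d) =
        (if \<exists>j i'. j \<le> i' \<and> d = cpow_sum p j i'
         then \<lceil>log (real p) (real ((p - 1) * d + 1))\<rceil>
         else \<lceil>log (real p) (real ((p - 1) * d + 1))\<rceil> - 1)"
proof -
  have p2: "2 \<le> p" using assms(1) by (simp add: prime_ge_2_nat)
  have hi: "(p - 1) * d + 1 \<le> p ^ Suc i"
  proof -
    have "(p - 1) * d \<le> (p - 1) * cpow_sum p 0 i" using assms(5) by simp
    moreover have "(p - 1) * cpow_sum p 0 i + 1 = p ^ Suc i" using geo[of p 0 i] p2 by simp
    ultimately show ?thesis by linarith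
  qed
  have geo1: "(p - 1) * cpow_sum p 0 (i - 1) + 1 = p ^ i"
    using geo[of p 0 "i - 1"] p2 assms(3) by simp
  have lo: "p ^ i \<le> (p - 1) * d + 1"
  proof -
    have "(p - 1) * cpow_sum p 0 (i - 1) \<le> (p - 1) * d" using assms(4) by simp
    then show ?thesis using geo1 by linarith
  qed
  define S where "S = {length ds + Min (multiplicity p ` set ds) | ds. adm_partition p d ds}"
  have up: "\<forall>y\<in>S. y \<le> Suc i \<and> (y = Suc i \<longrightarrow> (\<exists>j\<le>i. d = cpow_sum p j i))"
  proof
    fix y assume "y \<in> S"
    then obtain ds where "adm_partition p d ds" "y = length ds + Min (multiplicity p ` set ds)"
      unfolding S_def by blast
    then show "y \<le> Suc i \<and> (y = Suc i \<longrightarrow> (\<exists>j\<le>i. d = cpow_sum p j i))"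
      using upper_part[OF assms(1) _ hi] by simp
  qed
  have fin: "finite S" using up by (intro finite_subset[of S "{..Suc i}"]) auto
  obtain ds0 where ds0: "adm_partition p d ds0" "length ds0 = i"
    using lower_part[OF assms(1) assms(3) assms(4) assms(2)] by blast
  have y0: "length ds0 + Min (multiplicity p ` set ds0) \<in> S" unfolding S_def using ds0(1) by blast
  have tau: "tau p d = Max S" unfolding tau_def S_def by simp
  have part1: "tau p d = (if \<exists>j\<le>i. d = cpow_sum p j i then i + 1 else i)"
  proof (cases "\<exists>j\<le>i. d = cpow_sum p j i")
    case True
    then obtain j where j: "j \<le> i" "d = cpow_sum p j i" by blast
    have "Suc i \<in> S" unfolding S_def using desc_value[OF assms(1) j(1)] j(2) by (metis (mono_tags, lifting) mem_Collect_eq)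
    then have "Max S = Suc i" using up fin by (intro Max_eqI) auto
    then show ?thesis using True tau by simp
  next
    case False
    have "\<forall>y\<in>S. y \<le> i" using up False by fastforce
    moreover have "i \<le> Max S" using y0 ds0(2) fin by (meson Max_ge le_add1 le_trans)
    moreover have "Max S \<in> S" using y0 fin by (intro Max_in) auto
    ultimately have "Max S = i" by fastforce
    then show ?thesis using False tau by simp
  qed
  define N where "N = (p - 1) * d + 1"
  have cl: "\<lceil>log (real p) (real N)\<rceil> = (if N = p ^ i then int i else int i + 1)"
    using ceil_log[OF p2, of i N] lo hi unfolding N_def by simp
  have ex_iff: "(\<exists>j i'. j \<le> i' \<and> d = cpow_sum p j i') \<longleftrightarrow> (N = p ^ i \<or> (\<exists>j\<le>i. d = cpow_sum p j i))"
  proof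
    assume "\<exists>j i'. j \<le> i' \<and> d = cpow_sum p j i'"
    then obtain j i' where ji: "j \<le> i'" "d = cpow_sum p j i'" by blast
    have g: "(p - 1) * d + p ^ j = p ^ Suc i'" using geo[of p j i'] ji p2 by simp
    have pj: "p ^ j \<le> p ^ i'" using ji p2 by (intro power_increasing) auto
    have pj1: "1 \<le> p ^ j" using p2 by simp
    have s1: "N \<le> p ^ Suc i'" using g pj1 unfolding N_def by linarith
    have "p ^ Suc i' = p * p ^ i'" by simp
    moreover have "2 * p ^ i' \<le> p * p ^ i'" using p2 by simp
    ultimately have s2: "p ^ i' < N" using g pj unfolding N_def by linarith
    show "N = p ^ i \<or> (\<exists>j\<le>i. d = cpow_sum p j i)"
    proof (cases "N = p ^ i")
      case True then show ?thesis by simp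
    next
      case False
      then have lt: "p ^ i < N" using lo unfolding N_def by simp
      have "i' = i"
      proof (rule ccontr)
        assume "i' \<noteq> i"
        then consider "Suc i' \<le> i" | "Suc i \<le> i'" by linarith
        then show False
        proof cases
          case 1
          then have "p ^ Suc i' \<le> p ^ i" using p2 by (intro power_increasing) auto
          then show False using s1 lt by linarith
        next
          case 2
          then have "p ^ Suc i \<le> p ^ i'" using p2 by (intro power_increasing) auto
          then show False using s2 hi unfolding N_def by linarith
        qed
      qed
      then show ?thesis using ji by blast
    qed
  next
    assume "N = p ^ i \<or> (\<exists>j\<le>i. d = cpow_sum p j i)"
    then show "\<exists>j i'. j \<le> i' \<and> d = cpow_sum p j i'"
    proof
      assume "N = p ^ i"
      then have "(p - 1) * d = (p - 1) * cpow_sum p 0 (i - 1)" using geo1 unfolding N_def by linarith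
      then have "d = cpow_sum p 0 (i - 1)" using p2 by simp
      then show ?thesis by blast
    qed blast
  qed
  have notboth: "\<not> (N = p ^ i \<and> (\<exists>j\<le>i. d = cpow_sum p j i))"
  proof
    assume h: "N = p ^ i \<and> (\<exists>j\<le>i. d = cpow_sum p j i)"
    then obtain j where j: "j \<le> i" "d = cpow_sum p j i" by blast
    have g: "(p - 1) * d + p ^ j = p ^ Suc i" using geo[of p j i] j p2 by simp
    have pj: "p ^ j \<le> p ^ i" using j p2 by (intro power_increasing) auto
    have "p ^ Suc i = p * p ^ i" by simp
    moreover have "2 * p ^ i \<le> p * p ^ i" using p2 by simp
    ultimately show False using g pj h unfolding N_def by linarith
  qed
  show ?thesis
  proof (intro conjI)
    show "tau p d = (if \<exists>j\<le>i. d = cpow_sum p j i then i + 1 else i)" by (rule part1)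
    show "int (tau p d) =
        (if \<exists>j i'. j \<le> i' \<and> d = cpow_sum p j i'
         then \<lceil>log (real p) (real ((p - 1) * d + 1))\<rceil>
         else \<lceil>log (real p) (real ((p - 1) * d + 1))\<rceil> - 1)"
      using part1 cl ex_iff notboth unfolding N_def[symmetric] by auto
  qed
qed

end
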